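(* Let $G$ be a split reductive group whose root system $\Phi$ is irreducible of simply-laced type and of rank $r\geqslant2$, and let $\widetilde G$ be an $n$-fold Brylinski--Deligne cover associated with a Weyl-invariant quadratic form $Q$. Then $n_\alpha$ is independent of $\alpha\in\Delta$ and $$\mathrm{Im}(f_X)=\frac{[1,\mathrm{ht}(\alpha_0)]}{n_\alpha}=\mathrm{Im}(f_Y),$$ where $\mathrm{ht}(\alpha_0)$ is the height of the highest root $\alpha_0$ and $[a,b]$ denotes $\{a,a+1,\dots,b\}$.
   Context: Notation: root datum $(X,\Phi,\Delta;Y,\Phi^\vee,\Delta^\vee)$, positive roots $\Phi_+$, positive coroots $\Phi_+^\vee$; $\omega_\alpha\in X\otimes\mathbf R$ ($\alpha\in\Delta$) the fundamental weights (dual to $\Delta^\vee$), $\omega_\alpha^\vee$ the fundamental coweights, $\rho^\vee=\sum_{\alpha\in\Delta}\omega^\vee_\alpha$. $B_Q(y,z)=Q(y+z)-Q(y)-Q(z)$, $Y_{Q,n}=\{y\in Y:B_Q(y,z)\in n\mathbf Z\ \forall z\in Y\}$, $n_\alpha=n/\gcd(n,Q(\alpha^\vee))$, and $\tilde n_\alpha\in\{n_\alpha,n_\alpha/2\}$ ($\alpha\in\Phi$) is defined by $\mathbf Z\alpha^\vee\cap Y_{Q,n}=\mathbf Z\tilde n_\alpha\alpha^\vee$. Define $f_X:\Phi_+^\vee\to\mathbf Q$ by $f_X(\beta^\vee)=\sum_{\alpha\in\Delta}\langle\omega_\alpha/\tilde n_\alpha,\beta^\vee\rangle$ and $f_Y:\Phi_+\to\mathbf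 Q$ by $f_Y(\beta)=\langle\rho^\vee,\beta\rangle/\tilde n_\beta$. *)

theory Defs
  imports Complex_Main "HOL-Library.Function_Algebras"
begin

text \<open>Lattices X = Y = 'm => int (free of finite rank), with the standard perfect pairing.
  Real vector spaces X (x) R, Y (x) R are 'm => real.\<close>

type_synonym 'm lat = "'m \<Rightarrow> int"
type_synonym 'm rlat = "'m \<Rightarrow> real"

definition pair :: "'m::finite lat \<Rightarrow> 'm lat \<Rightarrow> int" where
  "pair x y = (\<Sum>i\<in>UNIV. x i * y i)"

definition rpair :: "'m::finite rlat \<Rightarrow> 'm lat \<Rightarrow> real" where
  "rpair w y = (\<Sum>i\<in>UNIV. w i * of_int (y i))"

definition smul :: "int \<Rightarrow> 'm lat \<Rightarrow> 'm lat" where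
  "smul k x = (\<lambda>i. k * x i)"

definition reflX :: "'m::finite lat \<Rightarrow> 'm lat \<Rightarrow> 'm lat \<Rightarrow> 'm lat" where
  "reflX a av x = (\<lambda>i. x i - pair x av * a i)"

definition reflY :: "'m::finite lat \<Rightarrow> 'm lat \<Rightarrow> 'm lat \<Rightarrow> 'm lat" where
  "reflY a av y = (\<lambda>i. y i - pair a y * av i)"

definition root_datum :: "'m::finite lat set \<Rightarrow> ('m lat \<Rightarrow> 'm lat) \<Rightarrow> bool" where
  "root_datum Phi cv \<longleftrightarrow> finite Phi \<and> inj_on cv Phi \<and>
     (\<forall>a\<in>Phi. pair a (cv a) = 2) \<and>
     (\<forall>a\<in>Phi. \<forall>b\<in>Phi. reflX a (cv a) b \<in> Phi) \<and>
     (\<forall>a\<in>Phi. \<forall>b\<in>Phi. reflY a (cv a) (cv b) \<in> cv ` Phi) \<and>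
     (\<forall>a\<in>Phi. smul 2 a \<notin> Phi)"

definition is_base :: "'m::finite lat set \<Rightarrow> 'm lat set \<Rightarrow> bool" where
  "is_base Phi Delta \<longleftrightarrow> Delta \<subseteq> Phi \<and>
     (\<forall>c::'m lat \<Rightarrow> int. (\<forall>i. (\<Sum>a\<in>Delta. c a * a i) = 0) \<longrightarrow> (\<forall>a\<in>Delta. c a = 0)) \<and>
     (\<forall>b\<in>Phi. \<exists>c::'m lat \<Rightarrow> int. (\<forall>i. b i = (\<Sum>a\<in>Delta. c a * a i)) \<and>
         ((\<forall>a\<in>Delta. c a \<ge> 0) \<or> (\<forall>a\<in>Delta. c a \<le> 0)))"

definition pos_roots :: "'m::finite lat set \<Rightarrow> 'm lat set \<Rightarrow> 'm lat set" where
  "pos_roots Phi Delta = {b\<in>Phi. \<exists>c::'m lat \<Rightarrow> int. (\<forall>i. b i = (\<Sum>a\<in>Delta. c a * a i)) \<and>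
         (\<forall>a\<in>Delta. c a \<ge> 0)}"

text \<open>Simply-laced: symmetric Cartan matrix. Irreducible: connected Dynkin diagram.\<close>
definition simply_laced :: "'m::finite lat set \<Rightarrow> ('m lat \<Rightarrow> 'm lat) \<Rightarrow> bool" where
  "simply_laced Delta cv \<longleftrightarrow> (\<forall>a\<in>Delta. \<forall>b\<in>Delta. pair a (cv b) = pair b (cv a))"

definition irreducible_base :: "'m::finite lat set \<Rightarrow> ('m lat \<Rightarrow> 'm lat) \<Rightarrow> bool" where
  "irreducible_base Delta cv \<longleftrightarrow> Delta \<noteq> {} \<and>
     \<not> (\<exists>A B. A \<noteq> {} \<and> B \<noteq> {} \<and> A \<union> B = Delta \<and> A \<inter> B = {} \<and>
           (\<forall>a\<in>A. \<forall>b\<in>B. pair a (cv b) = 0))"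

definition B_Q :: "('m lat \<Rightarrow> int) \<Rightarrow> 'm lat \<Rightarrow> 'm lat \<Rightarrow> int" where
  "B_Q Q y z = Q (y + z) - Q y - Q z"

definition quadratic_form :: "('m lat \<Rightarrow> int) \<Rightarrow> bool" where
  "quadratic_form Q \<longleftrightarrow> (\<forall>k y. Q (smul k y) = k^2 * Q y) \<and>
     (\<forall>y y' z. B_Q Q (y + y') z = B_Q Q y z + B_Q Q y' z)"

text \<open>Weyl-invariance: invariance under the reflections generating W (acting on Y).\<close>
definition weyl_invariant :: "'m::finite lat set \<Rightarrow> ('m lat \<Rightarrow> 'm lat) \<Rightarrow> ('m lat \<Rightarrow> int) \<Rightarrow> bool" where
  "weyl_invariant Phi cv Q \<longleftrightarrow> (\<forall>a\<in>Phi. \<forall>y. Q (reflY a (cv a) y) = Q y)"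

definition Y_Qn :: "('m lat \<Rightarrow> int) \<Rightarrow> nat \<Rightarrow> 'm lat set" where
  "Y_Qn Q n = {y. \<forall>z. int n dvd B_Q Q y z}"

definition n_root :: "('m lat \<Rightarrow> int) \<Rightarrow> nat \<Rightarrow> ('m lat \<Rightarrow> 'm lat) \<Rightarrow> 'm lat \<Rightarrow> int" where
  "n_root Q n cv a = int n div gcd (int n) (Q (cv a))"

definition n_tilde :: "('m lat \<Rightarrow> int) \<Rightarrow> nat \<Rightarrow> ('m lat \<Rightarrow> 'm lat) \<Rightarrow> 'm lat \<Rightarrow> int" where
  "n_tilde Q n cv a = (THE k. k > 0 \<and>
      {smul m (cv a) | m. True} \<inter> Y_Qn Q n = {smul (m * k) (cv a) | m. True})"

definition f_X :: "'m::finite lat set \<Rightarrow> ('m lat \<Rightarrow> 'm rlat) \<Rightarrow> ('m lat \<Rightarrow> int) \<Rightarrow> nat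
    \<Rightarrow> ('m lat \<Rightarrow> 'm lat) \<Rightarrow> 'm lat \<Rightarrow> real" where
  "f_X Delta omega Q n cv bv = (\<Sum>a\<in>Delta. rpair (omega a) bv / of_int (n_tilde Q n cv a))"

definition f_Y :: "'m::finite lat set \<Rightarrow> ('m lat \<Rightarrow> 'm rlat) \<Rightarrow> ('m lat \<Rightarrow> int) \<Rightarrow> nat
    \<Rightarrow> ('m lat \<Rightarrow> 'm lat) \<Rightarrow> 'm lat \<Rightarrow> real" where
  "f_Y Delta omegav Q n cv b = rpair (\<Sum>a\<in>Delta. omegav a) b / of_int (n_tilde Q n cv b)"

text \<open>height of a root: <rho^v, beta>; ht(alpha_0) = maximal height of a positive root.\<close>
definition ht :: "'m::finite lat set \<Rightarrow> ('m lat \<Rightarrow> 'm rlat) \<Rightarrow> 'm lat \<Rightarrow> real" where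
  "ht Delta omegav b = rpair (\<Sum>a\<in>Delta. omegav a) b"

end

theory Submission
  imports Defs
begin



lemma sum_fun_apply: "(\<Sum>a\<in>A. f a) (i::'b) = (\<Sum>a\<in>A. f a i)"
  by (induction A rule: infinite_finite_induct) auto

lemma pair_comm: "pair x y = pair y x"
  by (simp add: pair_def mult.commute)

lemma pair_lin1: "pair (\<lambda>i. p * x i + q * y i) z = p * pair x z + q * pair y z"
  by (simp add: pair_def algebra_simps sum.distrib sum_distrib_left)

lemma pair_lin2: "pair z (\<lambda>i. p * x i + q * y i) = p * pair z x + q * pair z y"
  by (simp add: pair_def algebra_simps sum.distrib sum_distrib_left)

lemma pair_ds1: "pair (\<lambda>i. x i - c * y i) z = pair x z - c * pair y z"
  using pair_lin1[of 1 x "-c" y z] by simp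
lemma pair_as1: "pair (\<lambda>i. x i + c * y i) z = pair x z + c * pair y z"
  using pair_lin1[of 1 x "c" y z] by simp
lemma pair_ds2: "pair z (\<lambda>i. x i - c * y i) = pair z x - c * pair z y"
  using pair_lin2[of z 1 x "-c" y] by simp
lemma pair_as2: "pair z (\<lambda>i. x i + c * y i) = pair z x + c * pair z y"
  using pair_lin2[of z 1 x "c" y] by simp
lemma pair_neg1: "pair (\<lambda>i. - x i) z = - pair x z"
  using pair_lin1[of "-1" x 0 x z] by simp
lemma pair_neg2: "pair z (\<lambda>i. - x i) = - pair z x"
  using pair_lin2[of z "-1" x 0 x] by simp
lemma pair_sm1: "pair (\<lambda>i. c * x i) z = c * pair x z"
  using pair_lin1[of c x 0 x z] by simp
lemma pair_sm2: "pair z (\<lambda>i. c * x i) = c * pair z x"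
  using pair_lin2[of z c x 0 x] by simp
lemma pair_sum1: "pair (\<lambda>i. \<Sum>a\<in>A. c a * x a i) z = (\<Sum>a\<in>A. c a * pair (x a) z)"
  by (simp add: pair_def sum_distrib_left sum_distrib_right sum.swap[of _ A] mult.assoc)
lemma pair_sum2: "pair z (\<lambda>i. \<Sum>a\<in>A. c a * x a i) = (\<Sum>a\<in>A. c a * pair z (x a))"
  using pair_sum1[of c x A z] by (simp add: pair_comm)

lemma unipotent:
  assumes fin: "finite (Phi :: 'm::finite lat set)"
    and cl: "\<forall>x\<in>Phi. (\<lambda>i. x i + pair x y * e i) \<in> Phi"
    and ey: "pair e y = 0" and x0: "x0 \<in> Phi" and nz: "pair x0 y \<noteq> 0"
  shows "e = 0"
proof (rule ccontr)
  assume "e \<noteq> 0"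
  then obtain j where ej: "e j \<noteq> 0" by (auto simp: fun_eq_iff)
  define c where "c = pair x0 y"
  define f where "f k = (\<lambda>i. x0 i + int k * c * e i)" for k :: nat
  have pf: "pair (f k) y = c" for k
    by (simp only: f_def pair_as1) (simp add: ey c_def)
  have "f k \<in> Phi" for k
  proof (induction k)
    case 0 then show ?case using x0 by (simp add: f_def)
  next
    case (Suc k)
    have "(\<lambda>i. f k i + pair (f k) y * e i) \<in> Phi" using cl Suc by blast
    moreover have "(\<lambda>i. f k i + pair (f k) y * e i) = f (Suc k)"
      unfolding pf by (simp add: f_def fun_eq_iff algebra_simps)
    ultimately show ?case by simp
  qed
  hence "range f \<subseteq> Phi" by auto
  moreover have "inj f"
  proof (rule injI)
    fix k l assume "f k = f l"
    hence "f k j = f l j" by simp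
    hence "int k * (c * e j) = int l * (c * e j)" by (simp add: f_def algebra_simps)
    moreover have "c * e j \<noteq> 0" using ej nz c_def by simp
    ultimately show "k = l" by simp
  qed
  ultimately have "infinite Phi"
    using finite_subset infinite_UNIV_nat finite_imageD by (metis inj_on_subset subset_UNIV)
  with fin show False by simp
qed




locale RD =
  fixes Phi Delta :: "'m::finite lat set" and cv :: "'m lat \<Rightarrow> 'm lat"
  assumes rd: "root_datum Phi cv" and base: "is_base Phi Delta"
begin

abbreviation s where "s a \<equiv> reflX a (cv a)"
abbreviation sv where "sv a \<equiv> reflY a (cv a)"

lemma finPhi: "finite Phi" using rd by (simp add: root_datum_def)
lemma injcv: "inj_on cv Phi" using rd by (simp add: root_datum_def)
lemma pair2: "a \<in> Phi \<Longrightarrow> pair a (cv a) = 2" using rd by (simp add: root_datum_def)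
lemma s_in: "a \<in> Phi \<Longrightarrow> b \<in> Phi \<Longrightarrow> s a b \<in> Phi" using rd by (simp add: root_datum_def)
lemma sv_in: "a \<in> Phi \<Longrightarrow> b \<in> Phi \<Longrightarrow> sv a (cv b) \<in> cv ` Phi" using rd by (simp add: root_datum_def)
lemma reduced: "a \<in> Phi \<Longrightarrow> smul 2 a \<notin> Phi" using rd by (simp add: root_datum_def)

lemma adjoint: "pair (reflX a av x) y = pair x (reflY a av y)"
  unfolding reflX_def reflY_def pair_ds1 pair_ds2 by (simp add: algebra_simps)

lemma s_invol: "a \<in> Phi \<Longrightarrow> s a (s a x) = x"
  unfolding reflX_def pair_ds1 by (simp add: pair2 fun_eq_iff algebra_simps)

lemma sv_invol: "a \<in> Phi \<Longrightarrow> sv a (sv a y) = y"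
  unfolding reflY_def pair_ds2 by (simp add: pair2 fun_eq_iff algebra_simps)

lemma s_lin: "reflX a av (\<lambda>i. x i - c * y i) = (\<lambda>i. reflX a av x i - c * reflX a av y i)"
  by (simp add: reflX_def pair_ds1 fun_eq_iff algebra_simps)

lemma sv_lin: "reflY a av (\<lambda>i. x i - c * y i) = (\<lambda>i. reflY a av x i - c * reflY a av y i)"
  by (simp add: reflY_def pair_ds2 fun_eq_iff algebra_simps)

lemma s_self: "a \<in> Phi \<Longrightarrow> s a a = (\<lambda>i. - a i)"
  by (simp add: reflX_def pair2 fun_eq_iff)

lemma sv_self: "a \<in> Phi \<Longrightarrow> sv a (cv a) = (\<lambda>i. - cv a i)"
  by (simp add: reflY_def pair2 fun_eq_iff)

lemma compat:
  assumes al: "al \<in> Phi" and be: "be \<in> Phi"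
  shows "cv (s al be) = sv al (cv be)"
proof -
  define ga where "ga = s al be"
  have ga: "ga \<in> Phi" using s_in al be ga_def by simp
  obtain de where de: "de \<in> Phi" "cv de = sv al (cv be)" using sv_in[OF al be] by auto
  have r: "s al (s be (s al x)) = (\<lambda>i. x i - pair x (cv de) * ga i)" for x
  proof -
    have "s be (s al x) = (\<lambda>i. s al x i - pair (s al x) (cv be) * be i)"
      by (simp add: reflX_def)
    hence "s al (s be (s al x)) = (\<lambda>i. s al (s al x) i - pair (s al x) (cv be) * s al be i)"
      by (simp add: s_lin)
    also have "\<dots> = (\<lambda>i. x i - pair x (cv de) * ga i)"
      using s_invol[OF al] adjoint[of al "cv al" x "cv be"] de(2) ga_def by simp
    finally show ?thesis .
  qed
  have v: "(\<lambda>i. x i + pair x (cv de) * (\<lambda>i. ga i - de i) i) = s al (s be (s al (s de x)))" for x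
  proof -
    have "pair (s de x) (cv de) = - pair x (cv de)"
      by (simp add: reflX_def pair_ds1 pair2[OF de(1)])
    then show ?thesis unfolding r by (simp add: reflX_def fun_eq_iff algebra_simps)
  qed
  have cl: "\<forall>x\<in>Phi. (\<lambda>i. x i + pair x (cv de) * (\<lambda>i. ga i - de i) i) \<in> Phi"
    unfolding v using s_in al be de(1) by blast
  have "pair ga (cv de) = 2"
    using adjoint[of al "cv al" be "sv al (cv be)"] sv_invol[OF al] pair2[OF be] ga_def de(2) by simp
  hence ey: "pair (\<lambda>i. ga i - de i) (cv de) = 0"
    using pair_ds1[of ga 1 de "cv de"] pair2[OF de(1)] by simp
  have "(\<lambda>i. ga i - de i) = 0"
    using unipotent[OF finPhi cl ey de(1)] pair2[OF de(1)] by simp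
  hence "ga = de" by (simp add: fun_eq_iff)
  thus ?thesis using de ga_def by simp
qed

end



context RD begin

definition form :: "'m lat \<Rightarrow> 'm lat \<Rightarrow> int" where
  "form x y = (\<Sum>g\<in>Phi. pair x (cv g) * pair y (cv g))"

lemma form_comm: "form x y = form y x"
  by (simp add: form_def mult.commute)

lemma form_lin1: "form (\<lambda>i. p * x i + q * y i) z = p * form x z + q * form y z"
  unfolding form_def pair_lin1 by (simp add: algebra_simps sum.distrib sum_distrib_left)

lemma form_ds1: "form (\<lambda>i. x i - c * y i) z = form x z - c * form y z"
  using form_lin1[of 1 x "-c" y z] by simp
lemma form_neg1: "form (\<lambda>i. - x i) z = - form x z"
  using form_lin1[of "-1" x 0 x z] by simp
lemma form_ds2: "form z (\<lambda>i. x i - c * y i) = form z x - c * form z y"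
  using form_ds1 form_comm by metis
lemma form_neg2: "form z (\<lambda>i. - x i) = - form z x"
  using form_neg1 form_comm by metis
lemma form_sum1: "form (\<lambda>i. \<Sum>a\<in>A. c a * x a i) z = (\<Sum>a\<in>A. c a * form (x a) z)"
  unfolding form_def pair_sum1 by (simp add: sum_distrib_left sum_distrib_right sum.swap[of _ A] mult.assoc)

lemma sv_bij: "al \<in> Phi \<Longrightarrow> bij_betw (sv al) (cv ` Phi) (cv ` Phi)"
proof -
  assume al: "al \<in> Phi"
  have inj: "inj_on (sv al) (cv ` Phi)"
    by (metis inj_onI sv_invol[OF al])
  have "sv al ` (cv ` Phi) \<subseteq> cv ` Phi" using sv_in[OF al] by auto
  moreover have "cv ` Phi \<subseteq> sv al ` (cv ` Phi)"
  proof
    fix w assume w: "w \<in> cv ` Phi"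
    then obtain g where "g \<in> Phi" "w = cv g" by auto
    hence "sv al w \<in> cv ` Phi" using sv_in[OF al] by auto
    moreover have "w = sv al (sv al w)" using sv_invol[OF al] by simp
    ultimately show "w \<in> sv al ` (cv ` Phi)" by blast
  qed
  ultimately show ?thesis using inj by (simp add: bij_betw_def)
qed

lemma form_inv: assumes al: "al \<in> Phi" shows "form (s al x) (s al y) = form x y"
proof -
  define F where "F w = pair x w * pair y w" for w
  have "form (s al x) (s al y) = (\<Sum>g\<in>Phi. F (sv al (cv g)))"
    unfolding form_def F_def adjoint by simp
  also have "\<dots> = (\<Sum>w\<in>cv ` Phi. F (sv al w))"
    using sum.reindex[OF injcv, of "\<lambda>w. F (sv al w)"] by simp
  also have "\<dots> = (\<Sum>w\<in>cv ` Phi. F w)"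
    using sum.reindex_bij_betw[OF sv_bij[OF al], of F] by simp
  also have "\<dots> = (\<Sum>g\<in>Phi. F (cv g))"
    using sum.reindex[OF injcv, of F] by simp
  finally show ?thesis by (simp add: form_def F_def)
qed

lemma form_P3: assumes al: "al \<in> Phi" shows "2 * form x al = pair x (cv al) * form al al"
proof -
  have "form x al = form (s al x) (s al al)" using form_inv[OF al] by simp
  also have "\<dots> = - form (s al x) al" by (simp add: s_self[OF al] form_neg2)
  also have "\<dots> = - (form x al - pair x (cv al) * form al al)"
    by (simp add: reflX_def form_ds1)
  finally show ?thesis by simp
qed

lemma form_nonneg: "form x x \<ge> 0"
  by (simp add: form_def sum_nonneg)

lemma form_pos: assumes al: "al \<in> Phi" shows "form al al > 0"
proof -
  have "pair al (cv al) * pair al (cv al) \<le> form al al"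
    unfolding form_def using member_le_sum[of al Phi "\<lambda>g. pair al (cv g) * pair al (cv g)"] al finPhi
    by simp
  thus ?thesis using pair2[OF al] by simp
qed

lemma form_zero: assumes "form x x = 0" "g \<in> Phi" shows "pair x (cv g) = 0"
proof -
  have "\<forall>g\<in>Phi. pair x (cv g) * pair x (cv g) = 0"
    using assms(1) sum_nonneg_eq_0_iff[OF finPhi, of "\<lambda>g. pair x (cv g) * pair x (cv g)"]
    by (simp add: form_def)
  thus ?thesis using assms(2) by simp
qed

end



context RD begin

definition rep :: "('m lat \<Rightarrow> int) \<Rightarrow> 'm lat" where
  "rep c = (\<lambda>i. \<Sum>a\<in>Delta. c a * a i)"

definition coef :: "'m lat \<Rightarrow> 'm lat \<Rightarrow> int" where
  "coef b = (SOME c. b = rep c)"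

definition htz :: "'m lat \<Rightarrow> int" where
  "htz b = (\<Sum>a\<in>Delta. coef b a)"

definition dl :: "'m lat \<Rightarrow> 'm lat \<Rightarrow> int" where
  "dl a = (\<lambda>b. if b = a then 1 else 0)"

abbreviation P where "P \<equiv> pos_roots Phi Delta"

lemma DsubPhi: "Delta \<subseteq> Phi" using base by (simp add: is_base_def)
lemma finD: "finite Delta" using DsubPhi finPhi finite_subset by blast

lemma rep_inj: assumes "rep c = rep d" "a \<in> Delta" shows "c a = d a"
proof -
  have "\<forall>i. (\<Sum>a\<in>Delta. (c a - d a) * a i) = 0"
  proof
    fix i have "rep c i = rep d i" using assms by simp
    thus "(\<Sum>a\<in>Delta. (c a - d a) * a i) = 0"
      by (simp add: rep_def algebra_simps sum_subtractf)
  qed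
  moreover have "\<forall>c. (\<forall>i. (\<Sum>a\<in>Delta. c a * a i) = 0) \<longrightarrow> (\<forall>a\<in>Delta. c a = 0)"
    using base unfolding is_base_def by blast
  ultimately have "\<forall>a\<in>Delta. c a - d a = 0" using spec[of _ "\<lambda>a. c a - d a"] by blast
  thus ?thesis using assms by simp
qed

lemma root_rep: assumes "b \<in> Phi"
  shows "\<exists>c. b = rep c \<and> ((\<forall>a\<in>Delta. c a \<ge> 0) \<or> (\<forall>a\<in>Delta. c a \<le> 0))"
proof -
  obtain c where "\<forall>i. b i = (\<Sum>a\<in>Delta. c a * a i)" "(\<forall>a\<in>Delta. c a \<ge> 0) \<or> (\<forall>a\<in>Delta. c a \<le> 0)"
    using base assms unfolding is_base_def by blast
  thus ?thesis by (auto simp: rep_def fun_eq_iff)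
qed

lemma coef_rep: assumes "b = rep c" shows "b = rep (coef b)"
  unfolding coef_def by (rule someI[of "\<lambda>c. b = rep c" c]) (rule assms)

lemma coef_eq: assumes "b = rep c" "a \<in> Delta" shows "coef b a = c a"
  using rep_inj[of c "coef b" a] coef_rep[OF assms(1)] assms by simp

lemma coef_root: "b \<in> Phi \<Longrightarrow> b = rep (coef b)"
  using root_rep coef_rep by metis

lemma coef_sign: assumes "b \<in> Phi"
  shows "(\<forall>a\<in>Delta. coef b a \<ge> 0) \<or> (\<forall>a\<in>Delta. coef b a \<le> 0)"
proof -
  obtain c where c: "b = rep c" "(\<forall>a\<in>Delta. c a \<ge> 0) \<or> (\<forall>a\<in>Delta. c a \<le> 0)"
    using root_rep[OF assms] by blast
  thus ?thesis using coef_eq[OF c(1)] by simp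
qed

lemma memP: "b \<in> P \<longleftrightarrow> b \<in> Phi \<and> (\<forall>a\<in>Delta. coef b a \<ge> 0)"
proof
  assume "b \<in> P"
  then obtain c where "b \<in> Phi" "\<forall>i. b i = (\<Sum>a\<in>Delta. c a * a i)" "\<forall>a\<in>Delta. c a \<ge> 0"
    unfolding pos_roots_def by blast
  moreover hence "b = rep c" by (simp add: rep_def fun_eq_iff)
  ultimately show "b \<in> Phi \<and> (\<forall>a\<in>Delta. coef b a \<ge> 0)" using coef_eq[of b c] by simp
next
  assume "b \<in> Phi \<and> (\<forall>a\<in>Delta. coef b a \<ge> 0)"
  moreover hence "\<forall>i. b i = (\<Sum>a\<in>Delta. coef b a * a i)"
    using coef_root[of b] by (simp add: rep_def fun_eq_iff)
  ultimately show "b \<in> P" unfolding pos_roots_def by blast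
qed

lemma PsubPhi: "P \<subseteq> Phi" using memP by blast
lemma finP: "finite P" using PsubPhi finPhi finite_subset by blast

lemma rep_dl: assumes a: "a \<in> Delta" shows "rep (dl a) = a"
proof -
  have "(\<Sum>b\<in>Delta. dl a b * b i) = a i" for i
  proof -
    have "(\<Sum>b\<in>Delta. dl a b * b i) = (\<Sum>b\<in>Delta. if b = a then a i else 0)"
      by (rule sum.cong) (auto simp: dl_def)
    thus ?thesis using a finD by simp
  qed
  thus ?thesis by (simp add: rep_def)
qed

lemma coef_simple: "a \<in> Delta \<Longrightarrow> x \<in> Delta \<Longrightarrow> coef a x = dl a x"
  using coef_eq[OF rep_dl[symmetric]] by simp

lemma htz_simple: "a \<in> Delta \<Longrightarrow> htz a = 1"
  unfolding htz_def using coef_simple by (simp add: dl_def finD)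

lemma DsubP: "Delta \<subseteq> P"
  using DsubPhi coef_simple by (auto simp: memP dl_def)

lemma neg_root: "b \<in> Phi \<Longrightarrow> (\<lambda>i. - b i) \<in> Phi"
  using s_self s_in by metis

lemma rep_lin: "rep (\<lambda>x. c x - k * d x) = (\<lambda>i. rep c i - k * rep d i)"
  by (simp add: rep_def fun_eq_iff algebra_simps sum_subtractf sum_distrib_left)

lemma coef_s: assumes a: "a \<in> Delta" and b: "b \<in> Phi" and x: "x \<in> Delta"
  shows "coef (s a b) x = coef b x - pair b (cv a) * dl a x"
proof -
  have "s a b = rep (\<lambda>x. coef b x - pair b (cv a) * dl a x)"
    unfolding rep_lin rep_dl[OF a] using coef_root[OF b] by (simp add: reflX_def)
  thus ?thesis using coef_eq[of "s a b" _ x] x by simp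
qed

lemma htz_s: assumes a: "a \<in> Delta" and b: "b \<in> Phi"
  shows "htz (s a b) = htz b - pair b (cv a)"
proof -
  have "htz (s a b) = (\<Sum>x\<in>Delta. coef b x - pair b (cv a) * dl a x)"
    unfolding htz_def using coef_s[OF a b] by simp
  also have "\<dots> = htz b - pair b (cv a)"
  proof -
    have "(\<Sum>x\<in>Delta. pair b (cv a) * dl a x) = (\<Sum>x\<in>Delta. if x = a then pair b (cv a) else 0)"
      by (rule sum.cong) (auto simp: dl_def)
    thus ?thesis using a finD by (simp add: sum_subtractf htz_def)
  qed
  finally show ?thesis .
qed

lemma htz_pos: assumes b: "b \<in> P" shows "htz b \<ge> 1"
proof (rule ccontr)
  assume "\<not> htz b \<ge> 1"
  moreover have nn: "\<forall>a\<in>Delta. coef b a \<ge> 0" using b memP by blast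
  ultimately have "htz b = 0" unfolding htz_def using sum_nonneg[of Delta "coef b"] by force
  hence "\<forall>a\<in>Delta. coef b a = 0" unfolding htz_def using sum_nonneg_eq_0_iff[OF finD] nn by blast
  moreover have "b = rep (coef b)" using coef_root b PsubPhi by blast
  ultimately have "b = (\<lambda>i. 0)" by (simp add: rep_def)
  moreover have "pair b (cv b) = 2" using pair2 b PsubPhi by blast
  ultimately show False by (simp add: pair_def)
qed

end



context RD begin

lemma form_lin2: "form z (\<lambda>i. p * x i + q * y i) = p * form z x + q * form z y"
  using form_lin1 form_comm by metis

lemma coef_neg: assumes b: "b \<in> Phi" and x: "x \<in> Delta" shows "coef (\<lambda>i. - b i) x = - coef b x"
proof -
  have "(\<lambda>i. - b i) = rep (\<lambda>x. - coef b x)"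
    using coef_root[OF b] by (simp add: rep_def sum_negf fun_eq_iff)
  thus ?thesis using coef_eq x by simp
qed

lemma step0: assumes b: "b \<in> P" "b \<notin> Delta"
  shows "\<exists>a\<in>Delta. pair b (cv a) > 0 \<and> s a b \<in> P"
proof -
  have bPhi: "b \<in> Phi" using b PsubPhi by blast
  have nn: "\<forall>a\<in>Delta. coef b a \<ge> 0" using b memP by blast
  have "form b b = form (rep (coef b)) b" using coef_root[OF bPhi] by simp
  also have "\<dots> = (\<Sum>a\<in>Delta. coef b a * form a b)" unfolding rep_def form_sum1 by simp
  finally have "(\<Sum>a\<in>Delta. coef b a * form a b) > 0" using form_pos[OF bPhi] by simp
  hence "\<exists>a\<in>Delta. coef b a * form a b > 0"
  proof (rule contrapos_pp)
    assume "\<not> (\<exists>a\<in>Delta. coef b a * form a b > 0)"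
    hence "\<forall>a\<in>Delta. coef b a * form a b \<le> 0" by (simp add: not_less)
    hence "(\<Sum>a\<in>Delta. coef b a * form a b) \<le> 0" by (intro sum_nonpos) auto
    thus "\<not> (\<Sum>a\<in>Delta. coef b a * form a b) > 0" by simp
  qed
  then obtain a where a: "a \<in> Delta" "coef b a * form a b > 0" by blast
  have aPhi: "a \<in> Phi" using a DsubPhi by blast
  have ca: "coef b a > 0" and fab: "form a b > 0"
    using a nn by (auto simp: zero_less_mult_iff)
  have "2 * form b a = pair b (cv a) * form a a" using form_P3[OF aPhi] .
  moreover have "form b a > 0" using fab form_comm[of a b] by simp
  ultimately have "pair b (cv a) * form a a > 0" by simp
  hence kpos: "pair b (cv a) > 0" using form_pos[OF aPhi] by (simp add: zero_less_mult_iff)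
  have "\<exists>x\<in>Delta. x \<noteq> a \<and> coef b x > 0"
  proof (rule ccontr)
    assume "\<not> ?thesis"
    hence z: "\<forall>x\<in>Delta. x \<noteq> a \<longrightarrow> coef b x = 0" using nn by force
    define m where "m = coef b a"
    have "b = (\<lambda>i. m * a i)"
    proof -
      have "b i = m * a i" for i
      proof -
        have "b i = rep (coef b) i" using coef_root[OF bPhi] by simp
        hence "b i = (\<Sum>x\<in>Delta. coef b x * x i)" by (simp add: rep_def)
        also have "\<dots> = (\<Sum>x\<in>Delta. if x = a then m * a i else 0)"
          by (rule sum.cong) (auto simp: z m_def)
        also have "\<dots> = m * a i" using a finD by simp
        finally show ?thesis .
      qed
      thus ?thesis by auto
    qed
    hence bm: "b = (\<lambda>i. m * a i)" .
    have "2 = pair b (cv b)" using pair2[OF bPhi] by simp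
    also have "\<dots> = m * pair a (cv b)"
    proof -
      have "\<forall>y. pair b y = m * pair a y" using bm by (simp add: pair_sm1)
      thus ?thesis by blast
    qed
    finally have "m dvd 2" unfolding dvd_def by blast
    hence "m \<le> 2" by (simp add: zdvd_imp_le)
    moreover have "m > 0" using ca m_def by simp
    ultimately have "m = 1 \<or> m = 2" by auto
    thus False
    proof
      assume "m = 1" hence "b = a" using bm by simp
      thus False using a b by simp
    next
      assume "m = 2" hence "b = smul 2 a" using bm by (simp add: smul_def)
      thus False using reduced[OF aPhi] bPhi by simp
    qed
  qed
  then obtain x where x: "x \<in> Delta" "x \<noteq> a" "coef b x > 0" by blast
  have sPhi: "s a b \<in> Phi" using s_in aPhi bPhi by blast
  have "coef (s a b) x > 0" using coef_s[OF a(1) bPhi x(1)] x by (simp add: dl_def)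
  hence "\<forall>y\<in>Delta. coef (s a b) y \<ge> 0" using coef_sign[OF sPhi] x(1) by force
  hence "s a b \<in> P" using sPhi memP by blast
  thus ?thesis using kpos a by blast
qed

end



lemma sq_le4: fixes k :: int assumes "k * k \<le> 4" shows "-2 \<le> k \<and> k \<le> 2"
proof (rule ccontr)
  assume "\<not> ?thesis"
  hence "3 \<le> \<bar>k\<bar>" by auto
  hence "3 * 3 \<le> \<bar>k\<bar> * \<bar>k\<bar>" by (intro mult_mono) auto
  hence "9 \<le> \<bar>k * k\<bar>" by (simp add: abs_mult)
  thus False using assms by simp
qed

locale RD2 = RD +
  assumes irr: "irreducible_base Delta cv" and sl: "simply_laced Delta cv"
    and card2: "card Delta \<ge> 2"
begin

lemma Dne: "Delta \<noteq> {}" using irr by (simp add: irreducible_base_def)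

definition a0 where "a0 = (SOME a. a \<in> Delta)"
lemma a0: "a0 \<in> Delta" unfolding a0_def using Dne by (simp add: some_in_eq)

definition L where "L = form a0 a0"

lemma Lpos: "L > 0" unfolding L_def using a0 DsubPhi by (intro form_pos) auto

lemma simple_len: assumes a: "a \<in> Delta" shows "form a a = L"
proof (rule ccontr)
  assume na: "form a a \<noteq> L"
  define A where "A = {x\<in>Delta. form x x = L}"
  define B where "B = Delta - A"
  have "a0 \<in> A" using a0 unfolding A_def L_def by simp
  hence "A \<noteq> {}" by auto
  moreover have "a \<in> B" using a na unfolding B_def A_def by simp
  hence "B \<noteq> {}" by auto
  moreover have "A \<union> B = Delta" "A \<inter> B = {}" using A_def B_def by auto
  moreover have "\<forall>x\<in>A. \<forall>y\<in>B. pair x (cv y) = 0"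
  proof (intro ballI)
    fix x y assume x: "x \<in> A" and y: "y \<in> B"
    have xD: "x \<in> Delta" and yD: "y \<in> Delta" using x y A_def B_def by auto
    have xP: "x \<in> Phi" and yP: "y \<in> Phi" using xD yD DsubPhi by auto
    have m: "pair x (cv y) = pair y (cv x)" using sl xD yD by (simp add: simply_laced_def)
    have "2 * form x y = pair x (cv y) * form y y" using form_P3[OF yP] .
    moreover have "2 * form y x = pair y (cv x) * form x x" using form_P3[OF xP] .
    moreover have "pair y (cv x) * form x x = pair x (cv y) * form x x" using m by simp
    ultimately have "pair x (cv y) * form y y = pair x (cv y) * form x x"
      using form_comm[of x y] by linarith
    moreover have "form y y \<noteq> form x x" using x y A_def B_def by auto
    ultimately show "pair x (cv y) = 0" by (metis mult_cancel_left)
  qed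
  ultimately have "\<exists>A B. A \<noteq> {} \<and> B \<noteq> {} \<and> A \<union> B = Delta \<and> A \<inter> B = {} \<and>
           (\<forall>a\<in>A. \<forall>b\<in>B. pair a (cv b) = 0)"
    by (intro exI[of _ A] exI[of _ B]) simp
  thus False using irr unfolding irreducible_base_def by blast
qed

lemma pos_len: assumes "b \<in> P" shows "form b b = L"
  using assms
proof (induction "nat (htz b)" arbitrary: b rule: less_induct)
  case less
  show ?case
  proof (cases "b \<in> Delta")
    case True thus ?thesis using simple_len by blast
  next
    case False
    then obtain a where a: "a \<in> Delta" "pair b (cv a) > 0" "s a b \<in> P"
      using step0 less.prems by blast
    have bPhi: "b \<in> Phi" using less.prems PsubPhi by blast
    have "htz (s a b) = htz b - pair b (cv a)" using htz_s[OF a(1) bPhi] .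
    moreover have "htz (s a b) \<ge> 1" using htz_pos[OF a(3)] .
    ultimately have "nat (htz (s a b)) < nat (htz b)" using a(2) by simp
    hence "form (s a b) (s a b) = L" using less.hyps a(3) by blast
    thus ?thesis using form_inv a(1) DsubPhi by auto
  qed
qed

lemma root_len: assumes b: "b \<in> Phi" shows "form b b = L"
proof (cases "\<forall>a\<in>Delta. coef b a \<ge> 0")
  case True thus ?thesis using pos_len b memP by blast
next
  case False
  hence "\<forall>a\<in>Delta. coef b a \<le> 0" using coef_sign[OF b] by blast
  hence "\<forall>a\<in>Delta. coef (\<lambda>i. - b i) a \<ge> 0" using coef_neg[OF b] by simp
  hence "(\<lambda>i. - b i) \<in> P" using neg_root[OF b] memP by blast
  hence "form (\<lambda>i. - b i) (\<lambda>i. - b i) = L" using pos_len by blast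
  thus ?thesis by (simp add: form_neg1 form_neg2)
qed

lemma P3L: assumes "al \<in> Phi" shows "2 * form x al = pair x (cv al) * L"
  using form_P3[OF assms] root_len[OF assms] by simp

lemma symm: assumes "al \<in> Phi" "be \<in> Phi" shows "pair be (cv al) = pair al (cv be)"
proof -
  have "pair be (cv al) * L = pair al (cv be) * L"
    using P3L[OF assms(1), of be] P3L[OF assms(2), of al] form_comm[of al be] by simp
  thus ?thesis using Lpos by simp
qed

lemma bound: assumes al: "al \<in> Phi" and be: "be \<in> Phi"
  shows "pair be (cv al) * pair be (cv al) \<le> 4"
proof -
  define k where "k = pair be (cv al)"
  define x where "x = (\<lambda>i. 2 * be i + (- k) * al i)"
  have e1: "2 * form be al = k * L" using P3L[OF al] k_def by simp
  have e2: "form al be = form be al" using form_comm by simp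
  have "form x x = 2 * form be x + (-k) * form al x" unfolding x_def form_lin1 ..
  also have "\<dots> = 2 * (2 * form be be + (-k) * form be al) + (-k) * (2 * form al be + (-k) * form al al)"
    unfolding x_def form_lin2 ..
  also have "\<dots> = (4 - k * k) * L"
    using e1 e2 root_len[OF al] root_len[OF be] by (simp add: algebra_simps)
  finally have "(4 - k * k) * L \<ge> 0" using form_nonneg[of x] by simp
  hence "4 - k * k \<ge> 0" using Lpos by (simp add: zero_le_mult_iff)
  thus ?thesis using k_def by simp
qed

lemma two: assumes al: "al \<in> Phi" and be: "be \<in> Phi" and k: "pair be (cv al) = 2"
  shows "be = al"
proof -
  define x where "x = (\<lambda>i. 1 * be i + (- 1) * al i)"
  have e1: "form be al = L" using P3L[OF al, of be] k by simp
  have "form x x = form be x + (-1) * form al x" unfolding x_def form_lin1 by simp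
  also have "\<dots> = (form be be + (-1) * form be al) + (-1) * (form al be + (-1) * form al al)"
    unfolding x_def form_lin2 by simp
  also have "\<dots> = 0" using e1 form_comm[of al be] root_len[OF al] root_len[OF be] by simp
  finally have x0: "form x x = 0" .
  have "form z x = 0" for z
    unfolding form_def using form_zero[OF x0] by simp
  hence "form z be = form z al" for z
    using form_lin2[of z 1 be "-1" al] x_def by simp
  hence h: "pair z (cv be) * L = pair z (cv al) * L" for z
    using P3L[OF al, of z] P3L[OF be, of z] by (metis mult_cancel_left zero_neq_numeral)
  have pz: "pair z (cv be) = pair z (cv al)" for z using h[of z] Lpos by simp
  define e where "e = (\<lambda>i. al i - be i)"
  have cl: "\<forall>y\<in>Phi. (\<lambda>i. y i + pair y (cv al) * e i) \<in> Phi"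
  proof
    fix y assume y: "y \<in> Phi"
    have "s al (s be y) = (\<lambda>i. y i + pair y (cv al) * e i)"
    proof -
      have "s be y = (\<lambda>i. y i - pair y (cv al) * be i)" using pz by (simp add: reflX_def)
      hence "s al (s be y) = (\<lambda>i. s al y i - pair y (cv al) * s al be i)" by (simp add: s_lin)
      thus ?thesis using k by (simp add: reflX_def e_def fun_eq_iff algebra_simps)
    qed
    thus "(\<lambda>i. y i + pair y (cv al) * e i) \<in> Phi" using s_in al be y by metis
  qed
  have "pair e (cv al) = 0"
    using pair_ds1[of al 1 be "cv al"] pair2[OF al] k e_def by simp
  hence "e = 0" using unipotent[OF finPhi cl _ al] pair2[OF al] by simp
  thus ?thesis by (simp add: e_def fun_eq_iff)
qed

lemma step1: assumes b: "b \<in> P" "b \<notin> Delta"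
  shows "\<exists>a\<in>Delta. pair b (cv a) = 1 \<and> s a b \<in> P"
proof -
  obtain a where a: "a \<in> Delta" "pair b (cv a) > 0" "s a b \<in> P" using step0[OF b] by blast
  have aP: "a \<in> Phi" and bP: "b \<in> Phi" using a b DsubPhi PsubPhi by auto
  have "pair b (cv a) * pair b (cv a) \<le> 4" using bound[OF aP bP] .
  hence "pair b (cv a) \<le> 2" using sq_le4 by blast
  moreover have "pair b (cv a) \<noteq> 2" using two[OF aP bP] a(1) b(2) by blast
  ultimately have "pair b (cv a) = 1" using a(2) by simp
  thus ?thesis using a by blast
qed

lemma neighbor: assumes a: "a \<in> Delta" shows "\<exists>z. pair a z = 1"
proof -
  have aP: "a \<in> Phi" using a DsubPhi by blast
  have "\<exists>b\<in>Delta - {a}. pair a (cv b) \<noteq> 0"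
  proof (rule ccontr)
    assume "\<not> ?thesis"
    hence h: "\<forall>x\<in>{a}. \<forall>y\<in>Delta - {a}. pair x (cv y) = 0" by simp
    have "Delta - {a} \<noteq> {}"
    proof
      assume "Delta - {a} = {}"
      hence "Delta \<subseteq> {a}" by blast
      hence "card Delta \<le> card {a}" by (rule card_mono[rotated]) simp
      hence "card Delta \<le> 1" by simp
      thus False using card2 by simp
    qed
    hence "\<exists>A B. A \<noteq> {} \<and> B \<noteq> {} \<and> A \<union> B = Delta \<and> A \<inter> B = {} \<and>
           (\<forall>a\<in>A. \<forall>b\<in>B. pair a (cv b) = 0)"
      apply -
      apply (rule exI[where x="{a}"])
      apply (rule exI[where x="Delta - {a}"])
      using a h by auto
    thus False using irr unfolding irreducible_base_def by blast
  qed
  then obtain b where b: "b \<in> Delta" "b \<noteq> a" "pair a (cv b) \<noteq> 0" by blast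
  have bP: "b \<in> Phi" using b DsubPhi by blast
  define k where "k = pair a (cv b)"
  have "k * k \<le> 4" using bound[OF bP aP] k_def by simp
  moreover have "k \<noteq> 2" using two[OF bP aP] b k_def by auto
  moreover have "k \<noteq> -2"
  proof
    assume "k = -2"
    hence "pair (\<lambda>i. - a i) (cv b) = 2" unfolding pair_neg1 using k_def by simp
    hence "(\<lambda>i. - a i) = b" using two[OF bP neg_root[OF aP]] by simp
    hence "coef b a = - coef a a" using coef_neg[OF aP a] by simp
    moreover have "coef b a = 0" "coef a a = 1" using coef_simple a b by (auto simp: dl_def)
    ultimately show False by simp
  qed
  moreover have "k \<noteq> 0" using b k_def by simp
  ultimately have "k = 1 \<or> k = -1" using sq_le4[of k] by auto
  hence "pair a (\<lambda>i. k * cv b i) = 1" unfolding pair_sm2 using k_def by auto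
  thus ?thesis by blast
qed

end



lemma smul_zero: "smul 0 y = 0" by (simp add: smul_def fun_eq_iff)

lemma BQ_comm: "B_Q Q y z = B_Q Q z y" by (simp add: B_Q_def add.commute)

lemma Q0: assumes "quadratic_form Q" shows "Q 0 = 0"
proof -
  have "Q (smul 0 (0::'a lat)) = 0" using assms unfolding quadratic_form_def by simp
  thus ?thesis by (simp add: smul_zero)
qed

lemma BQ_add1: "quadratic_form Q \<Longrightarrow> B_Q Q (y + y') z = B_Q Q y z + B_Q Q y' z"
  unfolding quadratic_form_def by blast

lemma BQ_add2: "quadratic_form Q \<Longrightarrow> B_Q Q z (y + y') = B_Q Q z y + B_Q Q z y'"
  using BQ_add1 BQ_comm by metis

lemma BQ_zero: "quadratic_form Q \<Longrightarrow> B_Q Q 0 z = 0"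
  by (simp add: B_Q_def Q0)

lemma BQ_smul_nat: assumes qf: "quadratic_form Q" shows "B_Q Q (smul (int k) y) z = int k * B_Q Q y z"
proof (induction k)
  case 0 thus ?case using BQ_zero[OF qf, of z] smul_zero[of y] by (metis of_nat_0 mult_zero_left)
next
  case (Suc k)
  have "smul (int (Suc k)) y = smul (int k) y + y" by (simp add: smul_def fun_eq_iff algebra_simps)
  hence "B_Q Q (smul (int (Suc k)) y) z = B_Q Q (smul (int k) y + y) z" by (rule arg_cong)
  also have "\<dots> = B_Q Q (smul (int k) y) z + B_Q Q y z" by (rule BQ_add1[OF qf])
  finally show ?case using Suc.IH by (simp add: algebra_simps)
qed

lemma BQ_smul: assumes qf: "quadratic_form Q" shows "B_Q Q (smul k y) z = k * B_Q Q y z"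
proof (cases "k \<ge> 0")
  case True thus ?thesis using BQ_smul_nat[OF qf, of "nat k"] by simp
next
  case False
  have "smul k y + smul (int (nat (-k))) y = 0" using False by (simp add: smul_def fun_eq_iff algebra_simps)
  hence "B_Q Q (smul k y) z + B_Q Q (smul (int (nat (-k))) y) z = 0"
    using BQ_add1[OF qf] BQ_zero[OF qf] by metis
  thus ?thesis using BQ_smul_nat[OF qf, of "nat (-k)"] False by simp
qed

lemma BQ_smul2: "quadratic_form Q \<Longrightarrow> B_Q Q z (smul k y) = k * B_Q Q z y"
  using BQ_smul BQ_comm by metis

lemma BQ_self: assumes qf: "quadratic_form Q" shows "B_Q Q y y = 2 * Q y"
proof -
  have "y + y = smul 2 y" by (simp add: smul_def fun_eq_iff)
  moreover have "Q (smul 2 y) = 4 * Q y" using qf unfolding quadratic_form_def by simp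
  ultimately show ?thesis by (simp add: B_Q_def)
qed

context RD begin

lemma sv_add: "reflY a av (y + z) = reflY a av y + reflY a av z"
proof -
  have "pair a (y + z) = pair a y + pair a z"
    using pair_lin2[of a 1 y 1 z] by (simp add: plus_fun_def)
  thus ?thesis by (simp add: reflY_def fun_eq_iff algebra_simps)
qed

lemma B_inv: assumes wi: "weyl_invariant Phi cv Q" and al: "al \<in> Phi"
  shows "B_Q Q (sv al y) (sv al z) = B_Q Q y z"
  using wi al unfolding B_Q_def weyl_invariant_def sv_add[symmetric] by simp

lemma Bformula: assumes qf: "quadratic_form Q" and wi: "weyl_invariant Phi cv Q" and al: "al \<in> Phi"
  shows "B_Q Q (cv al) z = pair al z * Q (cv al)"
proof -
  define t where "t = pair al z"
  have e1: "sv al (cv al) = smul (-1) (cv al)" by (simp add: sv_self[OF al] smul_def)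
  have e2: "sv al z = z + smul (-t) (cv al)" by (simp add: reflY_def smul_def t_def fun_eq_iff)
  have "B_Q Q (cv al) z = B_Q Q (sv al (cv al)) (sv al z)" using B_inv[OF wi al] by simp
  also have "\<dots> = - (B_Q Q (cv al) z + (-t) * B_Q Q (cv al) (cv al))"
    unfolding e1 e2 BQ_smul[OF qf] BQ_add2[OF qf] BQ_smul2[OF qf] by simp
  finally show ?thesis using BQ_self[OF qf] t_def by simp
qed

end

lemma dvd_gcd_iff: fixes n q m :: int assumes n: "n > 0"
  shows "n dvd m * q \<longleftrightarrow> (n div gcd n q) dvd m"
proof -
  define g where "g = gcd n q"
  have g: "g > 0" using n g_def by simp
  have n': "n = g * (n div g)" and q': "q = g * (q div g)" using g_def by simp_all
  have cop: "coprime (n div g) (q div g)" using div_gcd_coprime[of n q] n g_def by simp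
  have "n dvd m * q \<longleftrightarrow> g * (n div g) dvd g * (m * (q div g))"
    using n' q' by (metis mult.left_commute)
  also have "\<dots> \<longleftrightarrow> (n div g) dvd m * (q div g)" using g by simp
  also have "\<dots> \<longleftrightarrow> (n div g) dvd m" using cop coprime_dvd_mult_left_iff by blast
  finally show ?thesis using g_def by simp
qed

lemma smul_inj: assumes "smul m v = smul m' v" "v \<noteq> 0" shows "m = m'"
proof -
  obtain i where "v i \<noteq> 0" using assms(2) by (auto simp: fun_eq_iff)
  moreover have "smul m v i = smul m' v i" using assms(1) by simp
  ultimately show ?thesis by (simp add: smul_def)
qed

lemma ntilde:
  assumes qf: "quadratic_form Q" and Bf: "\<forall>z. B_Q Q (cv b) z = pair b z * q"
    and z1: "pair b z1 = 1" and nz: "cv b \<noteq> 0" and n: "n \<ge> 1"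
  shows "n_tilde Q n cv b = int n div gcd (int n) q"
proof -
  define N where "N = int n div gcd (int n) q"
  have np: "int n > 0" using n by simp
  have Npos: "N > 0"
  proof -
    have g: "gcd (int n) q > 0" using np by simp
    have "N * gcd (int n) q = int n" unfolding N_def by simp
    hence "0 < N * gcd (int n) q" using np by simp
    thus ?thesis using g by (simp add: zero_less_mult_iff)
  qed
  have mem: "smul m (cv b) \<in> Y_Qn Q n \<longleftrightarrow> N dvd m" for m
  proof
    assume "smul m (cv b) \<in> Y_Qn Q n"
    hence "int n dvd B_Q Q (smul m (cv b)) z1" by (simp add: Y_Qn_def)
    hence "int n dvd m * q" using BQ_smul[OF qf] Bf z1 by simp
    thus "N dvd m" using dvd_gcd_iff[OF np] N_def by simp
  next
    assume "N dvd m"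
    hence d: "int n dvd m * q" using dvd_gcd_iff[OF np] N_def by simp
    have "int n dvd B_Q Q (smul m (cv b)) z" for z
    proof -
      have "B_Q Q (smul m (cv b)) z = (m * q) * pair b z" using BQ_smul[OF qf] Bf by simp
      thus ?thesis using d by simp
    qed
    thus "smul m (cv b) \<in> Y_Qn Q n" by (simp add: Y_Qn_def)
  qed
  let ?S = "\<lambda>k. {smul m (cv b) | m. True} \<inter> Y_Qn Q n = {smul (m * k) (cv b) | m. True}"
  have SN: "?S N"
  proof (intro set_eqI iffI)
    fix x assume "x \<in> {smul m (cv b) | m. True} \<inter> Y_Qn Q n"
    then obtain m where m: "x = smul m (cv b)" "smul m (cv b) \<in> Y_Qn Q n" by blast
    have "N dvd m" using m(2) mem by simp
    then obtain m' where "m = N * m'" by (rule dvdE)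
    hence "x = smul (m' * N) (cv b)" using m by (simp add: mult.commute)
    thus "x \<in> {smul (m * N) (cv b) | m. True}" by blast
  next
    fix x assume "x \<in> {smul (m * N) (cv b) | m. True}"
    then obtain m where m: "x = smul (m * N) (cv b)" by blast
    have "smul (m * N) (cv b) \<in> Y_Qn Q n" using mem by simp
    thus "x \<in> {smul m (cv b) | m. True} \<inter> Y_Qn Q n" using m by blast
  qed
  have uniq: "k = N" if k: "k > 0" "?S k" for k
  proof -
    have xB: "smul k (cv b) \<in> {smul (m * k) (cv b) | m. True}"
      by (rule CollectI, rule exI[of _ 1]) simp
    have "smul k (cv b) \<in> {smul m (cv b) | m. True} \<inter> Y_Qn Q n"
      by (subst k(2)) (rule xB)
    hence "smul k (cv b) \<in> Y_Qn Q n" by blast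
    hence d1: "N dvd k" using mem by simp
    have "smul N (cv b) \<in> {smul m (cv b) | m. True} \<inter> Y_Qn Q n" using mem by auto
    then obtain m where "smul N (cv b) = smul (m * k) (cv b)" using k(2) by auto
    hence "N = m * k" using smul_inj nz by blast
    hence "k dvd N" by simp
    thus ?thesis using d1 k(1) Npos by (simp add: zdvd_antisym_nonneg)
  qed
  have "(THE k. k > 0 \<and> ?S k) = N"
    by (rule the_equality) (use SN Npos uniq in auto)
  thus ?thesis unfolding n_tilde_def N_def by simp
qed




lemma rpair_sum2: "rpair w (\<lambda>i. \<Sum>x\<in>A. c x * y x i) = (\<Sum>x\<in>A. of_int (c x) * rpair w (y x))"
  by (simp add: rpair_def sum_distrib_left sum.swap[of _ A] mult.left_commute)

lemma rpair_sum1: "rpair (\<Sum>a\<in>A. w a) y = (\<Sum>a\<in>A. rpair (w a) y)"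
  by (simp add: rpair_def sum_fun_apply sum_distrib_right sum.swap[of _ A])

context RD2 begin

lemma down: assumes "b \<in> P" "1 \<le> k" "k \<le> htz b" shows "\<exists>c\<in>P. htz c = k"
  using assms
proof (induction "nat (htz b - k)" arbitrary: b rule: less_induct)
  case less
  show ?case
  proof (cases "htz b = k")
    case True thus ?thesis using less.prems by blast
  next
    case False
    hence "htz b \<ge> 2" using less.prems by simp
    hence "b \<notin> Delta" using htz_simple by fastforce
    then obtain a where a: "a \<in> Delta" "pair b (cv a) = 1" "s a b \<in> P" using step1 less.prems by blast
    have "htz (s a b) = htz b - 1" using htz_s[OF a(1)] a(2) less.prems PsubPhi by auto
    thus ?thesis using less.hyps[of "s a b"] a(3) less.prems False by simp
  qed
qed

end

locale RD3 = RD2 +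
  fixes Q
  assumes qf: "quadratic_form Q" and wi: "weyl_invariant Phi cv Q"
begin

definition q where "q = Q (cv a0)"

lemma simpleQ: assumes a: "a \<in> Delta" shows "Q (cv a) = q"
proof (rule ccontr)
  assume na: "Q (cv a) \<noteq> q"
  define A where "A = {x\<in>Delta. Q (cv x) = q}"
  define B where "B = Delta - A"
  have "a0 \<in> A" using a0 unfolding A_def q_def by simp
  hence "A \<noteq> {}" by auto
  moreover have "a \<in> B" using a na unfolding B_def A_def by simp
  hence "B \<noteq> {}" by auto
  moreover have "A \<union> B = Delta" "A \<inter> B = {}" using A_def B_def by auto
  moreover have "\<forall>x\<in>A. \<forall>y\<in>B. pair x (cv y) = 0"
  proof (intro ballI)
    fix x y assume x: "x \<in> A" and y: "y \<in> B"
    have xD: "x \<in> Delta" and yD: "y \<in> Delta" using x y A_def B_def by auto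
    have xP: "x \<in> Phi" and yP: "y \<in> Phi" using xD yD DsubPhi by auto
    have m: "pair x (cv y) = pair y (cv x)" using sl xD yD by (simp add: simply_laced_def)
    have "B_Q Q (cv x) (cv y) = pair x (cv y) * Q (cv x)" using Bformula[OF qf wi xP] .
    moreover have "B_Q Q (cv y) (cv x) = pair y (cv x) * Q (cv y)" using Bformula[OF qf wi yP] .
    moreover have "pair y (cv x) * Q (cv y) = pair x (cv y) * Q (cv y)" using m by simp
    ultimately have "pair x (cv y) * Q (cv x) = pair x (cv y) * Q (cv y)"
      using BQ_comm[of Q "cv x" "cv y"] by linarith
    moreover have "Q (cv x) \<noteq> Q (cv y)" using x y A_def B_def by auto
    ultimately show "pair x (cv y) = 0" by (metis mult_cancel_left)
  qed
  ultimately have "\<exists>A B. A \<noteq> {} \<and> B \<noteq> {} \<and> A \<union> B = Delta \<and> A \<inter> B = {} \<and>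
           (\<forall>a\<in>A. \<forall>b\<in>B. pair a (cv b) = 0)"
    by (intro exI[of _ A] exI[of _ B]) simp
  thus False using irr unfolding irreducible_base_def by blast
qed

lemma main: assumes "b \<in> P"
  shows "Q (cv b) = q \<and> cv b = (\<lambda>i. \<Sum>x\<in>Delta. coef b x * cv x i) \<and> (\<exists>z. pair b z = 1)"
  using assms
proof (induction "nat (htz b)" arbitrary: b rule: less_induct)
  case less
  show ?case
  proof (cases "b \<in> Delta")
    case True
    have "(\<Sum>x\<in>Delta. coef b x * cv x i) = cv b i" for i
    proof -
      have "(\<Sum>x\<in>Delta. coef b x * cv x i) = (\<Sum>x\<in>Delta. if x = b then cv b i else 0)"
        by (rule sum.cong) (auto simp: coef_simple[OF True] dl_def)
      thus ?thesis using True finD by simp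
    qed
    thus ?thesis using simpleQ[OF True] neighbor[OF True] by auto
  next
    case False
    then obtain a where a: "a \<in> Delta" "pair b (cv a) = 1" "s a b \<in> P" using step1 less.prems by blast
    define b' where "b' = s a b"
    have aP: "a \<in> Phi" and bP: "b \<in> Phi" and b'P: "b' \<in> Phi"
      using a less.prems DsubPhi PsubPhi b'_def by auto
    have "htz b' = htz b - 1" using htz_s[OF a(1) bP] a(2) b'_def by simp
    moreover have "htz b' \<ge> 1" using htz_pos a(3) b'_def by simp
    ultimately have "nat (htz b') < nat (htz b)" by simp
    hence IH: "Q (cv b') = q" "cv b' = (\<lambda>i. \<Sum>x\<in>Delta. coef b' x * cv x i)" "\<exists>z. pair b' z = 1"
      using less.hyps a(3) b'_def by blast+
    have bb: "b = s a b'" using s_invol[OF aP] b'_def by simp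
    have cvb: "cv b = sv a (cv b')" using compat[OF aP b'P] bb by simp
    have Qb: "Q (cv b) = q" using cvb IH(1) wi aP unfolding weyl_invariant_def by simp
    have "pair b' (cv a) = -1"
      unfolding b'_def reflX_def pair_ds1 using a(2) pair2[OF aP] by simp
    hence pa: "pair a (cv b') = -1" using symm[OF b'P aP] by simp
    have cf: "coef b' x = coef b x - dl a x" if "x \<in> Delta" for x
      using coef_s[OF a(1) bP that] a(2) b'_def by simp
    have "cv b i = (\<Sum>x\<in>Delta. coef b x * cv x i)" for i
    proof -
      have "cv b i = cv b' i + cv a i" using cvb pa by (simp add: reflY_def)
      also have "\<dots> = (\<Sum>x\<in>Delta. (coef b x - dl a x) * cv x i) + cv a i"
        using IH(2) cf by (simp cong: sum.cong)
      also have "\<dots> = (\<Sum>x\<in>Delta. coef b x * cv x i) - (\<Sum>x\<in>Delta. dl a x * cv x i) + cv a i"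
        by (simp add: algebra_simps sum_subtractf)
      also have "(\<Sum>x\<in>Delta. dl a x * cv x i) = cv a i"
      proof -
        have "(\<Sum>x\<in>Delta. dl a x * cv x i) = (\<Sum>x\<in>Delta. if x = a then cv a i else 0)"
          by (rule sum.cong) (auto simp: dl_def)
        thus ?thesis using a(1) finD by simp
      qed
      finally show ?thesis by simp
    qed
    hence cvs: "cv b = (\<lambda>i. \<Sum>x\<in>Delta. coef b x * cv x i)" by auto
    obtain z where z: "pair b' z = 1" using IH(3) by blast
    have "pair b (sv a z) = pair (s a b) z" using adjoint[of a "cv a" b z] by simp
    hence "pair b (sv a z) = 1" using z b'_def by simp
    thus ?thesis using Qb cvs by blast
  qed
qed

end




theorem lemma3p1:
  fixes Phi Delta :: "('m::finite) lat set"
    and cv :: "'m lat \<Rightarrow> 'm lat"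
    and omega omegav :: "'m lat \<Rightarrow> 'm rlat"
    and Q :: "'m lat \<Rightarrow> int" and n :: nat
  assumes "root_datum Phi cv"
    and "is_base Phi Delta"
    and "irreducible_base Delta cv"
    and "simply_laced Delta cv"
    and "card Delta \<ge> 2"
    and "\<forall>a\<in>Delta. \<forall>b\<in>Delta. rpair (omega a) (cv b) = (if a = b then 1 else 0)"
    and "\<forall>a\<in>Delta. \<forall>b\<in>Delta. rpair (omegav a) b = (if a = b then 1 else 0)"
    and "n \<ge> 1"
    and "quadratic_form Q"
    and "weyl_invariant Phi cv Q"
  shows "\<exists>N. (\<forall>a\<in>Delta. n_root Q n cv a = N) \<and>
     f_X Delta omega Q n cv ` (cv ` pos_roots Phi Delta)
        = {real k / real_of_int N | k::nat. 1 \<le> k \<and> real k \<le> Max (ht Delta omegav ` pos_roots Phi Delta)} \<and>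
     f_Y Delta omegav Q n cv ` pos_roots Phi Delta
        = {real k / real_of_int N | k::nat. 1 \<le> k \<and> real k \<le> Max (ht Delta omegav ` pos_roots Phi Delta)}"
proof -
  interpret RD3 Phi Delta cv Q
    using assms by unfold_locales auto
  have om: "\<forall>a\<in>Delta. \<forall>b\<in>Delta. rpair (omega a) (cv b) = (if a = b then 1 else 0)" using assms(6) .
  have omv: "\<forall>a\<in>Delta. \<forall>b\<in>Delta. rpair (omegav a) b = (if a = b then 1 else 0)" using assms(7) .
  define N where "N = int n div gcd (int n) q"
  have Npos: "N > 0"
  proof -
    have np: "int n > 0" using assms(8) by simp
    have g: "gcd (int n) q > 0" using np by simp
    have "N * gcd (int n) q = int n" unfolding N_def by simp
    hence "0 < N * gcd (int n) q" using np by simp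
    thus ?thesis using g by (simp add: zero_less_mult_iff)
  qed
  have nt: "n_tilde Q n cv b = N" if b: "b \<in> P" for b
  proof -
    have bP: "b \<in> Phi" using b PsubPhi by blast
    obtain z where z: "pair b z = 1" using main[OF b] by blast
    have Qb: "Q (cv b) = q" using main[OF b] by blast
    have Bf: "\<forall>z. B_Q Q (cv b) z = pair b z * q" using Bformula[OF qf wi bP] unfolding Qb by simp
    have nz: "cv b \<noteq> 0" using pair2[OF bP] by (auto simp: pair_def)
    show ?thesis using ntilde[of Q cv b q z n, OF qf Bf z nz assms(8)] N_def by simp
  qed
  have nr: "\<forall>a\<in>Delta. n_root Q n cv a = N"
    using simpleQ by (simp add: n_root_def N_def)
  have htb: "ht Delta omegav b = real_of_int (htz b)" if b: "b \<in> P" for b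
  proof -
    have bP: "b \<in> Phi" using b PsubPhi by blast
    have "ht Delta omegav b = (\<Sum>a\<in>Delta. rpair (omegav a) b)"
      unfolding ht_def rpair_sum1 ..
    also have "\<dots> = (\<Sum>a\<in>Delta. rpair (omegav a) (rep (coef b)))"
      using coef_root[OF bP] by simp
    also have "\<dots> = (\<Sum>a\<in>Delta. (\<Sum>x\<in>Delta. of_int (coef b x) * rpair (omegav a) x))"
      unfolding rep_def rpair_sum2 ..
    also have "\<dots> = (\<Sum>a\<in>Delta. of_int (coef b a))"
    proof (rule sum.cong)
      fix a assume a: "a \<in> Delta"
      have "(\<Sum>x\<in>Delta. of_int (coef b x) * rpair (omegav a) x) = (\<Sum>x\<in>Delta. if x = a then of_int (coef b a) else 0)"
        by (rule sum.cong) (use omv a in auto)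
      thus "(\<Sum>x\<in>Delta. of_int (coef b x) * rpair (omegav a) x) = of_int (coef b a)"
        using a finD by simp
    qed simp
    finally show ?thesis by (simp add: htz_def)
  qed
  have fX: "f_X Delta omega Q n cv (cv b) = real_of_int (htz b) / real_of_int N" if b: "b \<in> P" for b
  proof -
    have cvb: "cv b = (\<lambda>i. \<Sum>x\<in>Delta. coef b x * cv x i)" using main[OF b] by blast
    have "f_X Delta omega Q n cv (cv b) = (\<Sum>a\<in>Delta. rpair (omega a) (cv b) / of_int N)"
      unfolding f_X_def using nt DsubP by (intro sum.cong) auto
    also have "\<dots> = (\<Sum>a\<in>Delta. of_int (coef b a) / of_int N)"
    proof (rule sum.cong)
      fix a assume a: "a \<in> Delta"
      have "rpair (omega a) (cv b) = (\<Sum>x\<in>Delta. of_int (coef b x) * rpair (omega a) (cv x))"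
        by (subst cvb) (rule rpair_sum2)
      also have "\<dots> = (\<Sum>x\<in>Delta. if x = a then of_int (coef b a) else 0)"
        by (rule sum.cong) (use om a in auto)
      finally show "rpair (omega a) (cv b) / of_int N = of_int (coef b a) / of_int N"
        using a finD by simp
    qed simp
    also have "\<dots> = real_of_int (htz b) / real_of_int N"
      by (simp add: htz_def sum_divide_distrib)
    finally show ?thesis .
  qed
  have fY: "f_Y Delta omegav Q n cv b = real_of_int (htz b) / real_of_int N" if b: "b \<in> P" for b
    using htb[OF b] nt[OF b] unfolding f_Y_def ht_def by simp
  define M where "M = Max (ht Delta omegav ` P)"
  have img: "(\<lambda>b. real_of_int (htz b) / real_of_int N) ` P
      = {real k / real_of_int N | k::nat. 1 \<le> k \<and> real k \<le> M}"
  proof (intro set_eqI iffI)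
    fix y assume "y \<in> (\<lambda>b. real_of_int (htz b) / real_of_int N) ` P"
    then obtain b where b: "b \<in> P" "y = real_of_int (htz b) / real_of_int N" by blast
    have h1: "htz b \<ge> 1" using htz_pos[OF b(1)] .
    have "ht Delta omegav b \<le> M" unfolding M_def using b(1) finP by (intro Max_ge) auto
    hence "real (nat (htz b)) \<le> M" using htb[OF b(1)] h1 by simp
    moreover have "y = real (nat (htz b)) / real_of_int N" using b(2) h1 by simp
    moreover have "1 \<le> nat (htz b)" using h1 by simp
    ultimately show "y \<in> {real k / real_of_int N | k::nat. 1 \<le> k \<and> real k \<le> M}" by blast
  next
    fix y assume "y \<in> {real k / real_of_int N | k::nat. 1 \<le> k \<and> real k \<le> M}"
    then obtain k :: nat where k: "y = real k / real_of_int N" "1 \<le> k" "real k \<le> M" by blast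
    have "P \<noteq> {}" using DsubP Dne by blast
    hence "M \<in> ht Delta omegav ` P" unfolding M_def using finP by (intro Max_in) auto
    then obtain b0 where b0: "b0 \<in> P" "M = ht Delta omegav b0" by blast
    hence "real k \<le> real_of_int (htz b0)" using k(3) htb by simp
    hence "int k \<le> htz b0" by linarith
    moreover have "1 \<le> int k" using k(2) by simp
    ultimately have "\<exists>c\<in>P. htz c = int k" using down[OF b0(1), of "int k"] by blast
    then obtain c where c: "c \<in> P" "htz c = int k" by blast
    have "y = real_of_int (htz c) / real_of_int N" using k(1) c(2) by simp
    thus "y \<in> (\<lambda>b. real_of_int (htz b) / real_of_int N) ` P" using c(1) by blast
  qed
  have c1: "f_X Delta omega Q n cv ` (cv ` P) = (\<lambda>b. real_of_int (htz b) / real_of_int N) ` P"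
    unfolding image_image by (rule image_cong) (simp_all add: fX)
  have c2: "f_Y Delta omegav Q n cv ` P = (\<lambda>b. real_of_int (htz b) / real_of_int N) ` P"
    by (rule image_cong) (simp_all add: fY)
  have eX: "f_X Delta omega Q n cv ` (cv ` P)
        = {real k / real_of_int N | k::nat. 1 \<le> k \<and> real k \<le> Max (ht Delta omegav ` P)}"
    unfolding c1 img M_def ..
  have eY: "f_Y Delta omegav Q n cv ` P
        = {real k / real_of_int N | k::nat. 1 \<le> k \<and> real k \<le> Max (ht Delta omegav ` P)}"
    unfolding c2 img M_def ..
  show ?thesis using nr eX eY by blast
qed



end
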